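(* Let $X$ be an anti-linear operator on $H^2(\mathbb{D})$. Then $XM_z=M_zX$ if and only if $X=J_{H^2(\mathbb{D})}M_\theta$ for some $\theta\in H^\infty(\mathbb{D})$.
   Context: $H^2(\mathbb{D})$ is the Hardy space of the unit disc, $M_z$ and $M_\theta$ denote multiplication by $z$ and by $\theta$, $H^\infty(\mathbb{D})$ is the algebra of bounded analytic functions on $\mathbb{D}$, and $J_{H^2(\mathbb{D})}(\sum a_nz^n)=\sum\bar a_nz^n$. *)

theory Defs
  imports "HOL-Analysis.Analysis"
begin

text \<open>The Hardy space H^2(D) is modelled by its Taylor coefficient sequences:
  f(z) = sum a_n z^n with sum |a_n|^2 < infinity.\<close>

definition H2 :: "(nat \<Rightarrow> complex) set" where
  "H2 = {a. summable (\<lambda>n. (cmod (a n))\<^sup>2)}"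

definition H2_norm :: "(nat \<Rightarrow> complex) \<Rightarrow> real" where
  "H2_norm a = sqrt (\<Sum>n. (cmod (a n))\<^sup>2)"

definition H2_fun :: "(nat \<Rightarrow> complex) \<Rightarrow> complex \<Rightarrow> complex" where
  "H2_fun a z = (\<Sum>n. a n * z ^ n)"

definition Mz :: "(nat \<Rightarrow> complex) \<Rightarrow> (nat \<Rightarrow> complex)" where
  "Mz a = (\<lambda>n. if n = 0 then 0 else a (n - 1))"

definition J :: "(nat \<Rightarrow> complex) \<Rightarrow> (nat \<Rightarrow> complex)" where
  "J a = (\<lambda>n. cnj (a n))"

definition Hinf :: "(complex \<Rightarrow> complex) set" where
  "Hinf = {\<theta>. \<theta> holomorphic_on ball 0 1 \<and> bounded (\<theta> ` ball 0 1)}"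

text \<open>Multiplication by theta: the Taylor coefficients of the function theta * f.\<close>
definition Mtheta :: "(complex \<Rightarrow> complex) \<Rightarrow> (nat \<Rightarrow> complex) \<Rightarrow> (nat \<Rightarrow> complex)" where
  "Mtheta \<theta> a = (\<lambda>n. (deriv ^^ n) (\<lambda>z. \<theta> z * H2_fun a z) 0 / fact n)"

definition antilinear_op :: "((nat \<Rightarrow> complex) \<Rightarrow> (nat \<Rightarrow> complex)) \<Rightarrow> bool" where
  "antilinear_op X \<longleftrightarrow>
     (\<forall>a\<in>H2. X a \<in> H2) \<and>
     (\<forall>a\<in>H2. \<forall>b\<in>H2. X (\<lambda>n. a n + b n) = (\<lambda>n. X a n + X b n)) \<and>
     (\<forall>c. \<forall>a\<in>H2. X (\<lambda>n. c * a n) = (\<lambda>n. cnj c * X a n)) \<and>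
     (\<exists>C. \<forall>a\<in>H2. H2_norm (X a) \<le> C * H2_norm a)"

end

theory Submission
  imports Defs "HOL-Complex_Analysis.Complex_Analysis"
begin

definition e0 :: "nat \<Rightarrow> complex" where "e0 = (\<lambda>n. if n = 0 then 1 else 0)"
definition conv :: "(nat \<Rightarrow> complex) \<Rightarrow> (nat \<Rightarrow> complex) \<Rightarrow> nat \<Rightarrow> complex" where
  "conv a b n = (\<Sum>i\<le>n. a i * b (n - i))"

lemma H2_Mz: "a \<in> H2 \<Longrightarrow> Mz a \<in> H2"
proof -
  assume "a \<in> H2"
  hence "summable (\<lambda>n. (cmod (Mz a (Suc n)))\<^sup>2)" by (simp add: H2_def Mz_def)
  thus ?thesis unfolding H2_def mem_Collect_eq by (rule iffD1[OF summable_Suc_iff])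
qed

lemma H2_tail: "a \<in> H2 \<Longrightarrow> (\<lambda>k. a (Suc k)) \<in> H2"
  unfolding H2_def using summable_Suc_iff[of "\<lambda>n. (cmod (a n))\<^sup>2"] by simp

lemma H2_J: "J a \<in> H2 \<longleftrightarrow> a \<in> H2"
  by (simp add: H2_def J_def)

lemma H2_norm_J: "H2_norm (J a) = H2_norm a"
  by (simp add: H2_norm_def J_def)

lemma J_J: "J (J a) = a" by (simp add: J_def)

lemma J_Mz: "J (Mz a) = Mz (J a)" by (auto simp: J_def Mz_def)

lemma e0_sums: "(\<lambda>n. f n * e0 n) sums f 0"
proof -
  have "(\<lambda>n. f n * e0 n) = (\<lambda>r. if r = 0 then f r else 0)" by (auto simp: e0_def)
  thus ?thesis using sums_single[of 0 f] by simp
qed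

lemma H2_e0: "e0 \<in> H2"
proof -
  have eq: "(\<lambda>n. (cmod (e0 n))\<^sup>2) = (\<lambda>r. if r = 0 then (\<lambda>_. 1::real) r else 0)" by (auto simp: e0_def)
  show ?thesis unfolding H2_def mem_Collect_eq by (subst eq) (rule sums_summable[OF sums_single])
qed

lemma H2_norm_e0: "H2_norm e0 = 1"
proof -
  have eq: "(\<lambda>n. (cmod (e0 n))\<^sup>2) = (\<lambda>r. if r = 0 then (\<lambda>_. 1::real) r else 0)" by (auto simp: e0_def)
  have "(\<Sum>n. (cmod (e0 n))\<^sup>2) = 1" by (subst eq) (rule sums_unique[OF sums_single, symmetric])
  thus ?thesis unfolding H2_norm_def by simp
qed

lemma amgm: "(x::real) * y \<le> (x\<^sup>2 + y\<^sup>2) / 2"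
proof -
  have "0 \<le> (x - y)\<^sup>2" by simp
  thus ?thesis by (simp add: power2_eq_square algebra_simps)
qed

lemma sq_add_le: "((x::real) + y)\<^sup>2 \<le> 2 * x\<^sup>2 + 2 * y\<^sup>2"
proof -
  have "0 \<le> (x - y)\<^sup>2" by simp
  thus ?thesis by (simp add: power2_eq_square algebra_simps)
qed

lemma H2_scale: "a \<in> H2 \<Longrightarrow> (\<lambda>n. c * a n) \<in> H2"
  unfolding H2_def by (simp add: norm_mult power_mult_distrib summable_mult)

lemma H2_add: assumes "a \<in> H2" "b \<in> H2" shows "(\<lambda>n. a n + b n) \<in> H2"
proof -
  have s: "summable (\<lambda>n. 2 * (cmod (a n))\<^sup>2 + 2 * (cmod (b n))\<^sup>2)"
    using assms unfolding H2_def by (intro summable_add summable_mult) auto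
  have "(cmod (a n + b n))\<^sup>2 \<le> 2 * (cmod (a n))\<^sup>2 + 2 * (cmod (b n))\<^sup>2" for n
  proof -
    have "cmod (a n + b n) \<le> cmod (a n) + cmod (b n)" by (rule norm_triangle_ineq)
    hence "(cmod (a n + b n))\<^sup>2 \<le> (cmod (a n) + cmod (b n))\<^sup>2" by (simp add: power_mono)
    also have "\<dots> \<le> 2 * (cmod (a n))\<^sup>2 + 2 * (cmod (b n))\<^sup>2"
      by (rule sq_add_le)
    finally show ?thesis .
  qed
  thus ?thesis unfolding H2_def mem_Collect_eq
    by (intro summable_comparison_test[OF _ s]) auto
qed

lemma H2_decomp: "a = (\<lambda>n. a 0 * e0 n + Mz (\<lambda>k. a (Suc k)) n)"
  by (rule ext, case_tac n) (simp_all add: e0_def Mz_def)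

lemma Mz_sums: assumes "(\<lambda>n. a n * z ^ n) sums s" shows "(\<lambda>n. Mz a n * z ^ n) sums (z * s)"
proof -
  have "(\<lambda>n. Mz a (Suc n) * z ^ (Suc n)) = (\<lambda>n. z * (a n * z ^ n))" by (auto simp: Mz_def)
  hence "(\<lambda>n. Mz a (Suc n) * z ^ (Suc n)) sums (z * s)" using sums_mult[OF assms] by simp
  thus ?thesis by (subst (asm) sums_Suc_iff) (simp add: Mz_def)
qed

lemma abs_summ: assumes "a \<in> H2" "cmod z < 1"
  shows "summable (\<lambda>n. cmod (a n * z ^ n))"
proof -
  have g: "summable (\<lambda>n. ((cmod z)\<^sup>2) ^ n)"
    using assms(2) by (intro summable_geometric) (simp add: abs_less_iff power_less_one_iff)
  have s: "summable (\<lambda>n. ((cmod (a n))\<^sup>2 + ((cmod z)\<^sup>2) ^ n) / 2)"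
    using assms(1) g unfolding H2_def by (intro summable_divide summable_add) auto
  have b: "cmod (a n * z ^ n) \<le> ((cmod (a n))\<^sup>2 + ((cmod z)\<^sup>2) ^ n) / 2" for n
  proof -
    have "cmod (a n * z ^ n) = cmod (a n) * cmod z ^ n" by (simp add: norm_mult norm_power)
    also have "\<dots> \<le> ((cmod (a n))\<^sup>2 + (cmod z ^ n)\<^sup>2) / 2" by (rule amgm)
    also have "(cmod z ^ n)\<^sup>2 = ((cmod z)\<^sup>2) ^ n" by (simp add: power_mult[symmetric] mult.commute)
    finally show ?thesis .
  qed
  show ?thesis by (rule summable_comparison_test'[OF s]) (simp only: real_norm_def abs_norm_cancel b)
qed

lemma amgm_t: assumes "(t::real) > 0" shows "x * y \<le> (t * x\<^sup>2 + y\<^sup>2 / t) / 2"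
proof -
  have "0 \<le> (t*x - y)\<^sup>2 / t" using assms by simp
  also have "(t*x - y)\<^sup>2 / t = t * x\<^sup>2 - 2*x*y + y\<^sup>2 / t" using assms
    by (simp add: power2_eq_square field_simps)
  finally show ?thesis by simp
qed

lemma eval_bound: assumes "a \<in> H2" "cmod z < 1" "t > 0"
  shows "cmod (H2_fun a z) \<le> (t * (\<Sum>n. (cmod (a n))\<^sup>2) + (\<Sum>n. ((cmod z)\<^sup>2) ^ n) / t) / 2"
proof -
  have g: "summable (\<lambda>n. ((cmod z)\<^sup>2) ^ n)"
    using assms(2) by (intro summable_geometric) (simp add: abs_less_iff power_less_one_iff)
  have sa: "summable (\<lambda>n. (cmod (a n))\<^sup>2)" using assms(1) by (simp add: H2_def)
  have ss: "(\<lambda>n. (t * (cmod (a n))\<^sup>2 + ((cmod z)\<^sup>2) ^ n / t) / 2) sums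
      ((t * (\<Sum>n. (cmod (a n))\<^sup>2) + (\<Sum>n. ((cmod z)\<^sup>2) ^ n) / t) / 2)"
    by (intro sums_divide sums_add sums_mult summable_sums sa g)
  have b: "cmod (a n * z ^ n) \<le> (t * (cmod (a n))\<^sup>2 + ((cmod z)\<^sup>2) ^ n / t) / 2" for n
  proof -
    have "cmod (a n * z ^ n) = cmod (a n) * cmod z ^ n" by (simp add: norm_mult norm_power)
    also have "\<dots> \<le> (t * (cmod (a n))\<^sup>2 + (cmod z ^ n)\<^sup>2 / t) / 2" by (rule amgm_t[OF assms(3)])
    also have "(cmod z ^ n)\<^sup>2 = ((cmod z)\<^sup>2) ^ n" by (simp add: power_mult[symmetric] mult.commute)
    finally show ?thesis .
  qed
  have "cmod (H2_fun a z) \<le> (\<Sum>n. cmod (a n * z ^ n))"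
    unfolding H2_fun_def by (rule summable_norm[OF abs_summ[OF assms(1,2)]])
  also have "\<dots> \<le> (t * (\<Sum>n. (cmod (a n))\<^sup>2) + (\<Sum>n. ((cmod z)\<^sup>2) ^ n) / t) / 2"
    by (rule sums_le[OF _ summable_sums[OF abs_summ[OF assms(1,2)]] ss]) (rule b)
  finally show ?thesis .
qed

lemma conv_sums: assumes "a \<in> H2" "b \<in> H2" "cmod z < 1"
  shows "(\<lambda>n. conv a b n * z ^ n) sums (H2_fun a z * H2_fun b z)"
proof -
  have "(\<lambda>k. \<Sum>i\<le>k. (a i * z ^ i) * (b (k - i) * z ^ (k - i))) sums
      ((\<Sum>k. a k * z ^ k) * (\<Sum>k. b k * z ^ k))"
    by (rule Cauchy_product_sums[OF abs_summ[OF assms(1,3)] abs_summ[OF assms(2,3)]])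
  moreover have "(\<Sum>i\<le>k. (a i * z ^ i) * (b (k - i) * z ^ (k - i))) = conv a b k * z ^ k" for k
  proof -
    have "(\<Sum>i\<le>k. (a i * z ^ i) * (b (k - i) * z ^ (k - i))) = (\<Sum>i\<le>k. a i * b (k - i) * z ^ k)"
    proof (rule sum.cong[OF refl])
      fix i assume "i \<in> {..k}"
      hence "z ^ i * z ^ (k - i) = z ^ k" by (simp add: power_add[symmetric])
      thus "(a i * z ^ i) * (b (k - i) * z ^ (k - i)) = a i * b (k - i) * z ^ k"
        by (subst \<open>z ^ i * z ^ (k - i) = z ^ k\<close>[symmetric]) (simp only: ac_simps)
    qed
    thus ?thesis by (simp add: conv_def sum_distrib_right)
  qed
  ultimately show ?thesis by (simp add: H2_fun_def)
qed

lemma taylor_coeff: fixes c :: "nat \<Rightarrow> complex" and F :: "complex \<Rightarrow> complex"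
  assumes "\<And>z. z \<in> ball 0 1 \<Longrightarrow> (\<lambda>n. c n * z ^ n) sums F z"
  shows "(deriv ^^ n) F 0 / fact n = c n"
proof -
  have "(\<lambda>n. c n * (1/2) ^ n) sums F (1/2)" by (rule assms) simp
  hence "conv_radius c \<ge> norm (1/2 :: complex)" by (intro conv_radius_geI sums_summable) auto
  hence h: "ereal (1/2) \<le> conv_radius c" by simp
  have r: "fps_conv_radius (Abs_fps c) > 0" unfolding fps_conv_radius_def
    by (simp, rule less_le_trans[OF _ h]) (simp add: zero_ereal_def)
  have "eventually (\<lambda>z. z \<in> ball (0::complex) 1) (nhds 0)"
    by (intro eventually_nhds_in_open) auto
  hence "eventually (\<lambda>z. eval_fps (Abs_fps c) z = F z) (nhds 0)"
    by eventually_elim (simp add: eval_fps_def sums_unique[OF assms, symmetric])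
  with r have "F has_fps_expansion Abs_fps c" by (simp add: has_fps_expansion_def)
  from fps_nth_fps_expansion[OF this, of n] show ?thesis by simp
qed

lemma H2_fun_holo: assumes "a \<in> H2" shows "H2_fun a holomorphic_on ball 0 1"
proof -
  have "conv_radius a \<ge> 1"
  proof (rule conv_radius_geI_ex')
    fix r :: real assume "0 < r" "ereal r < 1"
    hence "cmod (of_real r :: complex) < 1" by simp
    from summable_norm_cancel[OF abs_summ[OF assms this]]
    show "summable (\<lambda>n. a n * of_real r ^ n)" .
  qed
  note h = this
  have sub: "ball (0::complex) 1 \<subseteq> eball 0 (fps_conv_radius (Abs_fps a))"
  proof (rule subsetI)
    fix z :: complex assume "z \<in> ball 0 1"
    hence "ereal (dist 0 z) < 1" by simp
    hence "ereal (dist 0 z) < conv_radius a" using h by (rule less_le_trans)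
    thus "z \<in> eball 0 (fps_conv_radius (Abs_fps a))" by (simp add: fps_conv_radius_def)
  qed
  have "H2_fun a = eval_fps (Abs_fps a)" by (simp add: fun_eq_iff H2_fun_def eval_fps_def)
  thus ?thesis using holomorphic_on_eval_fps[OF sub] by simp
qed

lemma aux: fixes x a b c :: real assumes "x \<le> (a + b) / 2" "a \<le> c" shows "x \<le> (c + b) / 2"
proof -
  have "(a + b) / 2 \<le> (c + b) / 2" using assms(2) by (intro divide_right_mono) auto
  thus ?thesis using assms(1) by (rule order_trans[rotated])
qed

lemma H2_norm_sq: "a \<in> H2 \<Longrightarrow> (H2_norm a)\<^sup>2 = (\<Sum>n. (cmod (a n))\<^sup>2)"
  unfolding H2_norm_def H2_def by (simp add: suminf_nonneg)

lemma H2_norm_nonneg: "a \<in> H2 \<Longrightarrow> H2_norm a \<ge> 0"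
  unfolding H2_norm_def H2_def by (simp add: suminf_nonneg)

lemma H2_fun_Mz: assumes "f \<in> H2" "cmod z < 1" shows "H2_fun (Mz f) z = z * H2_fun f z"
proof -
  have "(\<lambda>n. f n * z ^ n) sums H2_fun f z"
    unfolding H2_fun_def by (rule summable_sums[OF summable_norm_cancel[OF abs_summ[OF assms]]])
  from Mz_sums[OF this] show ?thesis unfolding H2_fun_def by (rule sums_unique[symmetric])
qed

lemma backward:
  assumes th: "\<theta> \<in> Hinf" and f: "f \<in> H2"
  shows "Mtheta \<theta> (Mz f) = Mz (Mtheta \<theta> f)"
proof -
  define G where "G = (\<lambda>z. \<theta> z * H2_fun f z)"
  have holG: "G holomorphic_on ball 0 1"
    unfolding G_def using th H2_fun_holo[OF f] by (intro holomorphic_on_mult) (auto simp: Hinf_def)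
  define c where "c = Mtheta \<theta> f"
  have cs: "(\<lambda>n. c n * w ^ n) sums G w" if "w \<in> ball 0 1" for w
    using holomorphic_power_series[OF holG that] by (simp add: c_def Mtheta_def G_def)
  have "(\<lambda>n. Mz c n * w ^ n) sums (\<theta> w * H2_fun (Mz f) w)" if "w \<in> ball 0 1" for w
  proof -
    have "cmod w < 1" using that by simp
    hence "\<theta> w * H2_fun (Mz f) w = w * G w" by (simp add: H2_fun_Mz[OF f] G_def)
    thus ?thesis using Mz_sums[OF cs[OF that]] by simp
  qed
  hence "(deriv ^^ n) (\<lambda>z. \<theta> z * H2_fun (Mz f) z) 0 / fact n = Mz c n" for n
    by (rule taylor_coeff)
  thus ?thesis by (simp add: fun_eq_iff Mtheta_def c_def)
qed

theorem proposition10p1: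
  assumes "antilinear_op X"
  shows "(\<forall>f\<in>H2. X (Mz f) = Mz (X f)) \<longleftrightarrow>
         (\<exists>\<theta>\<in>Hinf. \<forall>f\<in>H2. X f = J (Mtheta \<theta> f))"
proof
  assume "\<exists>\<theta>\<in>Hinf. \<forall>f\<in>H2. X f = J (Mtheta \<theta> f)"
  then obtain \<theta> where th: "\<theta> \<in> Hinf" and rep: "\<And>f. f \<in> H2 \<Longrightarrow> X f = J (Mtheta \<theta> f)" by blast
  show "\<forall>f\<in>H2. X (Mz f) = Mz (X f)"
  proof
    fix f assume f: "f \<in> H2"
    have "X (Mz f) = J (Mtheta \<theta> (Mz f))" by (rule rep[OF H2_Mz[OF f]])
    also have "\<dots> = J (Mz (Mtheta \<theta> f))" by (simp add: backward[OF th f])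
    also have "\<dots> = Mz (X f)" by (simp add: J_Mz rep[OF f])
    finally show "X (Mz f) = Mz (X f)" .
  qed
next
  assume comm: "\<forall>f\<in>H2. X (Mz f) = Mz (X f)"
  have XH: "\<And>a. a \<in> H2 \<Longrightarrow> X a \<in> H2"
    and Xadd: "\<And>a b. a \<in> H2 \<Longrightarrow> b \<in> H2 \<Longrightarrow> X (\<lambda>n. a n + b n) = (\<lambda>n. X a n + X b n)"
    and Xsc: "\<And>c a. a \<in> H2 \<Longrightarrow> X (\<lambda>n. c * a n) = (\<lambda>n. cnj c * X a n)"
    using assms unfolding antilinear_op_def by blast+
  obtain C0 where C0: "\<And>a. a \<in> H2 \<Longrightarrow> H2_norm (X a) \<le> C0 * H2_norm a"
    using assms unfolding antilinear_op_def by blast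
  define C where "C = max C0 1"
  have C1: "C \<ge> 1" by (simp add: C_def)
  define Y where "Y = (\<lambda>a. J (X a))"
  have YH: "\<And>a. a \<in> H2 \<Longrightarrow> Y a \<in> H2" by (simp add: Y_def H2_J XH)
  have Yadd: "\<And>a b. a \<in> H2 \<Longrightarrow> b \<in> H2 \<Longrightarrow> Y (\<lambda>n. a n + b n) = (\<lambda>n. Y a n + Y b n)"
    by (simp add: Y_def Xadd J_def)
  have Ysc: "\<And>c a. a \<in> H2 \<Longrightarrow> Y (\<lambda>n. c * a n) = (\<lambda>n. c * Y a n)"
    by (simp add: Y_def Xsc J_def)
  have Ycomm: "\<And>a. a \<in> H2 \<Longrightarrow> Y (Mz a) = Mz (Y a)"
    using comm by (simp add: Y_def J_Mz)
  have Ynorm: "H2_norm (Y a) \<le> C * H2_norm a" if a: "a \<in> H2" for a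
  proof -
    have "H2_norm (Y a) \<le> C0 * H2_norm a" using C0[OF a] by (simp add: Y_def H2_norm_J)
    also have "\<dots> \<le> C * H2_norm a" by (rule mult_right_mono) (auto simp: C_def H2_norm_nonneg[OF a])
    finally show ?thesis .
  qed
  define g where "g = Y e0"
  have gH: "g \<in> H2" by (simp add: g_def YH H2_e0)
  have decompY: "Y f = (\<lambda>n. f 0 * g n + Mz (Y (\<lambda>k. f (Suc k))) n)" if f: "f \<in> H2" for f
  proof -
    have h: "(\<lambda>k. f (Suc k)) \<in> H2" by (rule H2_tail[OF f])
    have "Y f = Y (\<lambda>n. f 0 * e0 n + Mz (\<lambda>k. f (Suc k)) n)" by (subst H2_decomp[of f]) (rule refl)
    also have "\<dots> = (\<lambda>n. Y (\<lambda>n. f 0 * e0 n) n + Y (Mz (\<lambda>k. f (Suc k))) n)"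
      by (rule Yadd[OF H2_scale[OF H2_e0] H2_Mz[OF h]])
    also have "\<dots> = (\<lambda>n. f 0 * g n + Mz (Y (\<lambda>k. f (Suc k))) n)"
      by (simp add: Ysc[OF H2_e0] Ycomm[OF h] g_def)
    finally show ?thesis .
  qed
  have Yconv_n: "\<forall>f\<in>H2. Y f n = conv f g n" for n
  proof (induction n)
    case 0
    show ?case by (auto simp: conv_def decompY Mz_def)
  next
    case (Suc n)
    show ?case
    proof
      fix f assume f: "f \<in> H2"
      have "Y f (Suc n) = f 0 * g (Suc n) + Y (\<lambda>k. f (Suc k)) n"
        by (simp add: decompY[OF f] Mz_def)
      also have "Y (\<lambda>k. f (Suc k)) n = conv (\<lambda>k. f (Suc k)) g n"
        using Suc.IH H2_tail[OF f] by blast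
      also have "f 0 * g (Suc n) + conv (\<lambda>k. f (Suc k)) g n = conv f g (Suc n)"
        unfolding conv_def sum.atMost_Suc_shift by simp
      finally show "Y f (Suc n) = conv f g (Suc n)" .
    qed
  qed
  have Yconv: "Y f = conv f g" if "f \<in> H2" for f
    using Yconv_n that by (simp add: fun_eq_iff)
  define \<theta> where "\<theta> = H2_fun g"
  have rep: "X f = J (Mtheta \<theta> f)" if f: "f \<in> H2" for f
  proof -
    have "Mtheta \<theta> f n = conv f g n" for n
    proof -
      have "(deriv ^^ n) (\<lambda>z. \<theta> z * H2_fun f z) 0 / fact n = conv f g n"
      proof (rule taylor_coeff)
        fix z :: complex assume "z \<in> ball 0 1"
        hence "cmod z < 1" by simp
        from conv_sums[OF f gH this] show "(\<lambda>n. conv f g n * z ^ n) sums (\<theta> z * H2_fun f z)"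
          by (simp add: \<theta>_def mult.commute)
      qed
      thus ?thesis by (simp add: Mtheta_def)
    qed
    hence "Mtheta \<theta> f = Y f" by (simp add: fun_eq_iff Yconv[OF f])
    thus ?thesis by (simp add: Y_def J_J)
  qed
  define gm where "gm = (\<lambda>m. (Y ^^ m) e0)"
  have gmS: "gm (Suc m) = Y (gm m)" for m by (simp add: gm_def)
  have gmH: "gm m \<in> H2" for m
    by (induction m) (simp_all add: gmS YH, simp add: gm_def H2_e0)
  have gm_norm: "H2_norm (gm m) \<le> C ^ m" for m
  proof (induction m)
    case 0 show ?case by (simp add: gm_def H2_norm_e0)
  next
    case (Suc m)
    have "H2_norm (gm (Suc m)) \<le> C * H2_norm (gm m)" unfolding gmS by (rule Ynorm[OF gmH])
    also have "\<dots> \<le> C * C ^ m" using Suc.IH C1 by (intro mult_left_mono) auto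
    finally show ?case by simp
  qed
  have gm_fun: "H2_fun (gm m) z = \<theta> z ^ m" if z: "cmod z < 1" for m z
  proof (induction m)
    case 0
    have "(\<lambda>n. z ^ n * e0 n) sums (z ^ 0)" by (rule e0_sums)
    hence "(\<lambda>n. e0 n * z ^ n) sums 1" by (simp add: mult.commute)
    thus ?case by (simp add: gm_def H2_fun_def sums_unique[symmetric])
  next
    case (Suc m)
    have "H2_fun (gm (Suc m)) z = H2_fun (conv (gm m) g) z" by (simp add: gmS Yconv[OF gmH])
    also have "\<dots> = H2_fun (gm m) z * H2_fun g z"
      unfolding H2_fun_def[of "conv (gm m) g"] by (rule sums_unique[symmetric, OF conv_sums[OF gmH gH z]])
    finally show ?case using Suc.IH by (simp add: \<theta>_def mult.commute)
  qed
  have bnd: "cmod (\<theta> z) \<le> C" if z: "cmod z < 1" for z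
  proof (rule ccontr)
    assume "\<not> cmod (\<theta> z) \<le> C"
    hence gt: "cmod (\<theta> z) / C > 1" using C1 by simp
    define K where "K = (\<Sum>n. ((cmod z)\<^sup>2) ^ n)"
    have Cpos: "C ^ m > 0" for m using C1 by simp
    have le: "(cmod (\<theta> z) / C) ^ m \<le> (1 + K) / 2" for m
    proof -
      define S where "S = (\<Sum>n. (cmod (gm m n))\<^sup>2)"
      have "cmod (\<theta> z) ^ m = cmod (H2_fun (gm m) z)" by (simp add: gm_fun[OF z] norm_power)
      also have "\<dots> \<le> ((1 / C ^ m) * S + K / (1 / C ^ m)) / 2"
        unfolding K_def S_def by (rule eval_bound[OF gmH z]) (simp add: Cpos)
      finally have e1: "cmod (\<theta> z) ^ m \<le> ((1 / C ^ m) * S + K / (1 / C ^ m)) / 2" .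
      have "S \<le> (C ^ m)\<^sup>2"
        unfolding S_def H2_norm_sq[OF gmH, symmetric]
        by (rule power_mono[OF gm_norm H2_norm_nonneg[OF gmH]])
      hence e2: "(1 / C ^ m) * S \<le> C ^ m"
        using Cpos[of m] by (simp add: field_simps power2_eq_square)
      have e3: "K / (1 / C ^ m) = K * C ^ m" by simp
      have "cmod (\<theta> z) ^ m \<le> (C ^ m + K * C ^ m) / 2"
        using aux[OF e1 e2] unfolding e3 .
      hence "cmod (\<theta> z) ^ m \<le> C ^ m * ((1 + K) / 2)" by (simp add: algebra_simps)
      thus ?thesis using Cpos[of m] by (simp add: power_divide field_simps)
    qed
    from real_arch_pow[OF gt, of "(1 + K) / 2"] obtain m where "(1 + K) / 2 < (cmod (\<theta> z) / C) ^ m" by blast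
    with le[of m] show False by simp
  qed
  have "\<theta> \<in> Hinf"
  proof -
    have "\<theta> ` ball 0 1 \<subseteq> cball 0 C" using bnd by auto
    hence "bounded (\<theta> ` ball 0 1)" by (rule bounded_subset[OF bounded_cball])
    thus ?thesis unfolding Hinf_def using H2_fun_holo[OF gH] by (simp add: \<theta>_def)
  qed
  with rep show "\<exists>\<theta>\<in>Hinf. \<forall>f\<in>H2. X f = J (Mtheta \<theta> f)" by blast
qed

end
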